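(* Let $B,C,D\in\mathbb{C}$. If all roots of the polynomial $x^3+Bx^2+Cx+D$ have the same absolute value, then $C|C|^2=\overline{B}|B|^2D$.
   Context: $\overline{z}$ denotes complex conjugation. *)

theory Defs
  imports "HOL-Analysis.Analysis" "HOL-Computational_Algebra.Polynomial"
begin

end

theory Submission
  imports Defs "HOL-Computational_Algebra.Fundamental_Theorem_Algebra"
begin

lemma key_alg0:
  fixes z1 z2 z3 w1 w2 w3 R :: complex
  assumes "z1 * w1 = R" "z2 * w2 = R" "z3 * w3 = R" "z1 \<noteq> 0" "z2 \<noteq> 0" "z3 \<noteq> 0"
  shows "(z1*z2+z1*z3+z2*z3) * ((z1*z2+z1*z3+z2*z3) * (w1*w2+w1*w3+w2*w3))
     = (-(w1+w2+w3)) * ((-(z1+z2+z3)) * (-(w1+w2+w3))) * (-(z1*z2*z3))"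
proof -
  define P where "P = z1*z2*z3"
  have P0: "P \<noteq> 0" using assms(4-6) unfolding P_def by simp
  have a: "w1 = R/z1" "w2 = R/z2" "w3 = R/z3" using assms by (auto simp: field_simps)
  have W1: "w1+w2+w3 = R*(z1*z2+z1*z3+z2*z3)/P"
    unfolding a P_def using assms(4-6) by (simp add: field_simps)
  have W2: "w1*w2+w1*w3+w2*w3 = R*R*(z1+z2+z3)/P"
    unfolding a P_def using assms(4-6) by (simp add: field_simps)
  show ?thesis unfolding W1 W2 P_def[symmetric] using P0 by (simp add: field_simps)
qed

lemma key_alg:
  fixes z1 z2 z3 :: complex and R :: complex
  assumes "z1 * cnj z1 = R" "z2 * cnj z2 = R" "z3 * cnj z3 = R"
  shows "(z1*z2+z1*z3+z2*z3) * ((z1*z2+z1*z3+z2*z3) * (cnj z1*cnj z2+cnj z1*cnj z3+cnj z2*cnj z3))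
     = (-(cnj z1+cnj z2+cnj z3)) * ((-(z1+z2+z3)) * (-(cnj z1+cnj z2+cnj z3))) * (-(z1*z2*z3))"
proof (cases "R = 0")
  case True
  then have "z1 = 0" "z2 = 0" "z3 = 0" using assms by auto
  thus ?thesis by simp
next
  case False
  then have "z1 \<noteq> 0" "z2 \<noteq> 0" "z3 \<noteq> 0" using assms by auto
  thus ?thesis using key_alg0 assms by blast
qed

theorem lemma4p5:
  fixes B C D :: complex
  assumes "\<forall>z w. poly [:D, C, B, 1:] z = 0 \<and> poly [:D, C, B, 1:] w = 0 \<longrightarrow> cmod z = cmod w"
  shows "C * of_real ((cmod C)^2) = cnj B * of_real ((cmod B)^2) * D"
proof -
  have "degree [:D, C, B, 1:] > 0" by simp
  then obtain z1 where r1: "poly [:D, C, B, 1:] z1 = 0" using alg_closed_imp_poly_has_root by blast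
  define s where "s = B + z1"
  define t where "t = C + z1 * s"
  define z2 where "z2 = (- s + csqrt (s^2 - 4*t)) / 2"
  define z3 where "z3 = - s - z2"
  have q: "z2^2 + s*z2 + t = 0"
  proof -
    define c where "c = csqrt (s^2 - 4*t)"
    have c2: "c^2 = s^2 - 4*t" unfolding c_def by simp
    have "4*(z2^2 + s*z2 + t) = c^2 - (s^2 - 4*t)"
      unfolding z2_def c_def[symmetric] by (simp add: field_simps power2_eq_square)
    then have h: "4*(z2^2 + s*z2 + t) = 0" using c2 by simp
    show ?thesis using h by (simp only: mult_eq_0_iff) simp
  qed
  have p0: "z2*z3 = -(z2^2 + s*z2 + t) + t" by (simp add: z3_def algebra_simps power2_eq_square)
  have p: "z2 * z3 = t" using p0 q by simp
  have e1: "z1^3 + B*z1^2 + C*z1 + D = 0" using r1 by (simp add: algebra_simps power2_eq_square power3_eq_cube)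
  have hB: "B = -(z1+z2+z3)" unfolding z3_def s_def by simp
  have hC: "C = z1*z2+z1*z3+z2*z3"
    using p unfolding t_def z3_def s_def by (simp add: algebra_simps)
  have hD: "D = -(z1*z2*z3)"
  proof -
    have d0: "D = -z1*t + (z1^3 + B*z1^2 + C*z1 + D)"
      by (simp add: t_def s_def algebra_simps power2_eq_square power3_eq_cube)
    have "D = - z1 * t" using d0 e1 by simp
    thus ?thesis using p by (simp add: algebra_simps)
  qed
  have fac: "poly [:D, C, B, 1:] z = (z-z1)*(z-z2)*(z-z3)" for z
    unfolding hB hC hD by (simp add: algebra_simps)
  have root: "poly [:D, C, B, 1:] z = 0" if "z = z1 \<or> z = z2 \<or> z = z3" for z
    using that unfolding fac by auto
  define R :: complex where "R = of_real ((cmod z1)^2)"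
  have m: "z * cnj z = R" if "z = z1 \<or> z = z2 \<or> z = z3" for z
  proof -
    have r0: "poly [:D, C, B, 1:] z1 = 0" by (rule root) simp
    have "cmod z = cmod z1" using assms root[OF that] r0 by blast
    thus ?thesis unfolding R_def by (simp add: complex_norm_square[symmetric])
  qed
  have "C * (C * cnj C) = cnj B * (B * cnj B) * D"
    unfolding hB hC hD complex_cnj_add complex_cnj_mult complex_cnj_minus
    using key_alg[OF m[of z1] m[of z2] m[of z3]] by simp
  thus ?thesis by (simp only: complex_norm_square)
qed

end
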